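(* Let $e\ge2$, $\kappa\in\mathbb Z^\ell$ with $\kappa_l-\kappa_{l+1}\ge n$, $\mathbb K$ a field and $0\ne t\in\mathbb K$ with $(\mathbb K,t)$ separating $\mathrm{Std}(\mathcal P_n)$. If $\mathbf i\in I^n$ and $1\le r<n$ satisfy $i_r=i_{r+1}$, then $T_rf_{\mathbf i}=f_{\mathbf i}T_r$ in $\mathscr H_n(\mathbb K)$.
   Context: Quantum integers $[d]=[d]_t$. $\mathscr H_n(\mathbb K)=\mathscr H_n(\mathbb K,t,\kappa)$: generators $L_1..L_n,T_1..T_{n-1}$, relations $\prod_l(L_1-[\kappa_l])=0$, $(T_r+1)(T_r-t)=0$, $L_rL_s=L_sL_r$, $T_rT_s=T_sT_r$ ($|r-s|>1$), $T_sT_{s+1}T_s=T_{s+1}T_sT_{s+1}$, $T_rL_s=L_sT_r$ ($s\ne r,r+1$), $L_{r+1}(T_r-t+1)=T_rL_r+1$. Separation: $[n]^!\prod_{l<m}\prod_{-n<d<n}[\kappa_l-\kappa_m+d]\ne0$. $I=\mathbb Z/e\mathbb Z$; content of $(l,r,c)$ is $\kappa_l-r+c$, residue $\kappa_l+c-r\bmod e$; $c_k(\mathfrak t)$ the content of $k$; $\mathrm{Std}(\mathbf i)$ the standard $\ell$-multitableaux of size $n$ with residue sequence $\mathbf i$. With $\mathrm{Cont}$ the set of all contents of standard tableaux, $F_{\mathfrak t}=\prod_k\prod_{c\in\mathrm{Cont},[c_k(\mathfrak t)]\ne[c]}\frac{L_k-[c]}{[c_k(\mathfrak t)]-[c]}$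 and $f_{\mathbf i}=\sum_{\mathfrak t\in\mathrm{Std}(\mathbf i)}F_{\mathfrak t}$. *)

theory Defs
  imports Main
begin

definition qint :: "'k::field \<Rightarrow> int \<Rightarrow> 'k" where
  "qint t d = (if t = 1 then of_int d else (t powi d - 1) / (t - 1))"

text \<open>Nodes are triples (l, r, c): component l, row r, column c (all 1-based).\<close>
definition content :: "(nat \<Rightarrow> int) \<Rightarrow> nat \<times> nat \<times> nat \<Rightarrow> int" where
  "content \<kappa> x = (case x of (l, r, c) \<Rightarrow> \<kappa> l - int r + int c)"

definition residue :: "nat \<Rightarrow> (nat \<Rightarrow> int) \<Rightarrow> nat \<times> nat \<times> nat \<Rightarrow> int" where
  "residue e \<kappa> x = content \<kappa> x mod int e"

definition mp_diagram :: "nat \<Rightarrow> (nat \<times> nat \<times> nat) set \<Rightarrow> bool" where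
  "mp_diagram ell D \<longleftrightarrow> finite D \<and>
     (\<forall>(l, r, c) \<in> D. 1 \<le> l \<and> l \<le> ell \<and> 1 \<le> r \<and> 1 \<le> c \<and>
        (\<forall>r' c'. 1 \<le> r' \<and> r' \<le> r \<and> 1 \<le> c' \<and> c' \<le> c \<longrightarrow> (l, r', c') \<in> D))"

text \<open>Standard ell-multitableaux of size n: the list xs places entry k at node xs!(k-1);
  entries increase along rows and down columns in each component.\<close>
definition std_tab :: "nat \<Rightarrow> nat \<Rightarrow> (nat \<times> nat \<times> nat) list set" where
  "std_tab ell n = {xs. length xs = n \<and> distinct xs \<and> mp_diagram ell (set xs) \<and>
     (\<forall>i<n. \<forall>j<n. fst (xs!i) = fst (xs!j) \<and> fst (snd (xs!i)) \<le> fst (snd (xs!j))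
         \<and> snd (snd (xs!i)) \<le> snd (snd (xs!j)) \<longrightarrow> i \<le> j)}"

definition std_res :: "nat \<Rightarrow> nat \<Rightarrow> (nat \<Rightarrow> int) \<Rightarrow> nat \<Rightarrow> int list \<Rightarrow> (nat \<times> nat \<times> nat) list set" where
  "std_res ell n \<kappa> e i = {xs \<in> std_tab ell n. map (residue e \<kappa>) xs = i}"

definition conts :: "nat \<Rightarrow> nat \<Rightarrow> (nat \<Rightarrow> int) \<Rightarrow> int set" where
  "conts ell n \<kappa> = {content \<kappa> (xs!k) | xs k. xs \<in> std_tab ell n \<and> k < n}"

definition separating :: "'k::field \<Rightarrow> (nat \<Rightarrow> int) \<Rightarrow> nat \<Rightarrow> nat \<Rightarrow> bool" where
  "separating t \<kappa> ell n \<longleftrightarrow>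
     (\<Prod>k\<in>{1..n}. qint t (int k)) *
     (\<Prod>l\<in>{1..ell}. \<Prod>m\<in>{l<..ell}. \<Prod>d\<in>{-(int n)<..<int n}. qint t (\<kappa> l - \<kappa> m + d)) \<noteq> 0"

text \<open>A K-algebra structure on a ring: a unital ring homomorphism with central image.\<close>
definition central_hom :: "('k::field \<Rightarrow> 'a::ring_1) \<Rightarrow> bool" where
  "central_hom \<phi> \<longleftrightarrow> \<phi> 1 = 1 \<and> (\<forall>x y. \<phi> (x + y) = \<phi> x + \<phi> y) \<and>
     (\<forall>x y. \<phi> (x * y) = \<phi> x * \<phi> y) \<and> (\<forall>x a. \<phi> x * a = a * \<phi> x)"

definition hecke_rel :: "('k::field \<Rightarrow> 'a::ring_1) \<Rightarrow> 'k \<Rightarrow> (nat \<Rightarrow> int) \<Rightarrow> nat \<Rightarrow> nat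
    \<Rightarrow> (nat \<Rightarrow> 'a) \<Rightarrow> (nat \<Rightarrow> 'a) \<Rightarrow> bool" where
  "hecke_rel \<phi> t \<kappa> ell n L T \<longleftrightarrow>
     prod_list (map (\<lambda>l. L 1 - \<phi> (qint t (\<kappa> l))) [1..<ell+1]) = 0 \<and>
     (\<forall>r\<in>{1..<n}. (T r + 1) * (T r - \<phi> t) = 0) \<and>
     (\<forall>r\<in>{1..n}. \<forall>s\<in>{1..n}. L r * L s = L s * L r) \<and>
     (\<forall>r\<in>{1..<n}. \<forall>s\<in>{1..<n}. (r + 1 < s \<or> s + 1 < r) \<longrightarrow> T r * T s = T s * T r) \<and>
     (\<forall>s. 1 \<le> s \<and> s + 1 < n \<longrightarrow> T s * T (s+1) * T s = T (s+1) * T s * T (s+1)) \<and>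
     (\<forall>r\<in>{1..<n}. \<forall>s\<in>{1..n}. s \<noteq> r \<and> s \<noteq> r + 1 \<longrightarrow> T r * L s = L s * T r) \<and>
     (\<forall>r\<in>{1..<n}. L (r+1) * (T r - \<phi> t + 1) = T r * L r + 1)"

definition F_tab :: "('k::field \<Rightarrow> 'a::ring_1) \<Rightarrow> 'k \<Rightarrow> (nat \<Rightarrow> int) \<Rightarrow> nat \<Rightarrow> nat
    \<Rightarrow> (nat \<Rightarrow> 'a) \<Rightarrow> (nat \<times> nat \<times> nat) list \<Rightarrow> 'a" where
  "F_tab \<phi> t \<kappa> ell n L xs =
     prod_list (map (\<lambda>k. prod_list (map (\<lambda>c.
        (L k - \<phi> (qint t c)) * \<phi> (inverse (qint t (content \<kappa> (xs!(k-1))) - qint t c)))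
        (sorted_list_of_set {c \<in> conts ell n \<kappa>. qint t (content \<kappa> (xs!(k-1))) \<noteq> qint t c})))
      [1..<n+1])"

definition f_idem :: "('k::field \<Rightarrow> 'a::ring_1) \<Rightarrow> 'k \<Rightarrow> (nat \<Rightarrow> int) \<Rightarrow> nat \<Rightarrow> nat \<Rightarrow> nat
    \<Rightarrow> (nat \<Rightarrow> 'a) \<Rightarrow> int list \<Rightarrow> 'a" where
  "f_idem \<phi> t \<kappa> e ell n L i = (\<Sum>xs\<in>std_res ell n \<kappa> e i. F_tab \<phi> t \<kappa> ell n L xs)"

end

theory Submission
  imports Defs "HOL-Library.Product_Lexorder"
begin


lemma core_Ty:
  fixes T x y c si :: "'a::ring_1"
  assumes cc: "\<And>z. c*z = z*c" and inv: "(c+1)*si = 1"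
    and quad: "T*T = c*T + (c+1)" and A: "T*x = y*T - c*y - 1"
  shows "T*y = x*T + c*y + 1"
proof -
  have TyT: "T*y*T = c*(T*x) + (c+1)*x + c*(T*y) + T"
  proof -
    have "T*(T*x) = T*(y*T - c*y - 1)" using A by simp
    hence "T*(T*x) = T*(y*T) - T*(c*y) - T" by (simp add: right_diff_distrib)
    hence "T*y*T = T*T*x + T*(c*y) + T" by (simp add: algebra_simps)
    also have "T*(c*y) = c*(T*y)" by (metis cc mult.assoc)
    also have "T*T*x = c*(T*x) + (c+1)*x" using quad by (simp add: algebra_simps)
    finally show ?thesis by (simp add: algebra_simps)
  qed
  have cm: "\<And>u v. u*(c*v) = c*(u*v)" by (metis cc mult.assoc)
  define D where "D = T*y - x*T - c*y - 1"
  have "D*(T - c) = T*y*T - c*(T*y) - x*(T*T) + c*(x*T) - c*(y*T) + c*(c*y) - T + c"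
    proof -
    have f: "T*(y*c) = c*(T*y)" "x*(T*c) = c*(x*T)" "c*(y*c) = c*(c*y)" "x*(c*T) = c*(x*T)"
      using cm cc by (metis mult.assoc)+
    show ?thesis unfolding D_def by (simp add: algebra_simps f)
  qed
  also have "\<dots> = c*(T*x) - c*(y*T) + c*(c*y) + c"
    proof -
    have f: "x*(c*T) = c*(x*T)" "x*c = c*x" using cm cc by (metis mult.assoc)+
    show ?thesis unfolding TyT quad by (simp add: algebra_simps f)
  qed
  also have "\<dots> = c*(T*x - y*T + c*y + 1)" by (simp add: algebra_simps)
  also have "\<dots> = 0" using A by simp
  finally have D0: "D*(T-c) = 0" .
  have "(T-c)*T = c+1" using quad by (simp add: algebra_simps cc)
  hence "D*(c+1) = 0" using D0 by (metis mult.assoc mult_zero_left)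
  hence "D*(c+1)*si = 0" by simp
  hence "D = 0" using inv by (simp add: mult.assoc)
  thus ?thesis unfolding D_def by (simp add: algebra_simps)
qed

lemma e_comm:
  fixes T x y c si :: "'a::ring_1"
  assumes cc: "\<And>z. c*z = z*c" and inv: "(c+1)*si = 1"
    and quad: "T*T = c*T + (c+1)" and A: "T*x = y*T - c*y - 1" and xy: "x*y = y*x"
  shows "T*(x+y) = (x+y)*T" "T*(x*y) = (x*y)*T"
proof -
  have B: "T*y = x*T + c*y + 1" by (rule core_Ty[OF cc inv quad A])
  show "T*(x+y) = (x+y)*T" using A B by (simp add: algebra_simps)
  have "T*(x*y) = (T*x)*y" by (simp add: mult.assoc)
  also have "\<dots> = y*(T*y) - c*(y*y) - y" unfolding A by (simp add: algebra_simps)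
  also have "\<dots> = y*x*T" proof -
    have f: "y*(c*y) = c*(y*y)" by (metis cc mult.assoc)
    show ?thesis unfolding B by (simp add: algebra_simps f)
  qed
  finally show "T*(x*y) = (x*y)*T" using xy by simp
qed



definition cmT :: "'a::ring_1 \<Rightarrow> 'a \<Rightarrow> bool" where "cmT T z \<longleftrightarrow> T*z = z*T"

lemma cmT_add: "cmT T a \<Longrightarrow> cmT T b \<Longrightarrow> cmT T (a+b)"
  unfolding cmT_def by (simp add: algebra_simps)
lemma cmT_mult: "cmT T a \<Longrightarrow> cmT T b \<Longrightarrow> cmT T (a*b)"
  unfolding cmT_def by (metis mult.assoc)
lemma cmT_diff: "cmT T a \<Longrightarrow> cmT T b \<Longrightarrow> cmT T (a-b)"
  unfolding cmT_def by (simp add: algebra_simps)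
lemma cmT_0: "cmT T 0" and cmT_1: "cmT T 1" unfolding cmT_def by simp_all
lemma cmT_pow: "cmT T a \<Longrightarrow> cmT T (a^k)"
  by (induct k) (simp_all add: cmT_1 cmT_mult)
lemma cmT_sum: "(\<And>j. j \<in> A \<Longrightarrow> cmT T (f j)) \<Longrightarrow> cmT T (sum f A)"
  by (induct A rule: infinite_finite_induct) (simp_all add: cmT_0 cmT_add)
lemma cmT_prod_list: "(\<And>z. z \<in> set zs \<Longrightarrow> cmT T z) \<Longrightarrow> cmT T (prod_list zs)"
  by (induct zs) (simp_all add: cmT_1 cmT_mult)

lemma cmT_psum:
  fixes T x y :: "'a::ring_1"
  assumes e1: "cmT T (x+y)" and e2: "cmT T (x*y)" and xy: "x*y = y*x"
  shows "cmT T (x^m + y^m)"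
proof -
  have yx: "\<And>k. y*x^k = x^k*y" using power_commuting_commutes[OF xy] by metis
  have "cmT T (x^m + y^m) \<and> cmT T (x^Suc m + y^Suc m)"
  proof (induct m)
    case 0 then show ?case using e1 by (simp add: cmT_def mult_2 mult_2_right)
  next
    case (Suc m)
    have "x^Suc (Suc m) + y^Suc (Suc m) = (x+y)*(x^Suc m + y^Suc m) - (x*y)*(x^m+y^m)"
    proof -
      have k: "y*(x*x^m) = x*(y*x^m)" by (metis mult.assoc xy)
      show ?thesis by (simp add: algebra_simps k)
    qed
    then show ?case using Suc e1 e2 by (simp add: cmT_mult cmT_diff)
  qed
  thus ?thesis by simp
qed

lemma cmT_h:
  fixes T x y :: "'a::ring_1"
  assumes e1: "cmT T (x+y)" and e2: "cmT T (x*y)" and xy: "x*y = y*x"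
  shows "cmT T (x^i*y^j + x^j*y^i)"
proof -
  have pc: "\<And>a b. x^a*y^b = y^b*x^a" using power_commuting_commutes[OF xy]
    by (metis power_commuting_commutes)
  have dd: "cmT T (x^k*y^k)" for k
  proof (induct k)
    case 0 then show ?case by (simp add: cmT_1)
  next
    case (Suc k)
    have "x^Suc k*y^Suc k = (x*y)*(x^k*y^k)"
    proof -
      have k: "x^k*(y*z) = y*(x^k*z)" for z by (metis mult.assoc power_commuting_commutes xy)
      show ?thesis by (simp add: mult.assoc k)
    qed
    then show ?case using Suc e2 by (simp add: cmT_mult)
  qed
  have main: "cmT T (x^i*y^j + x^j*y^i)" if "i \<le> j" for i j
  proof -
    obtain d where j: "j = i + d" using \<open>i\<le>j\<close> le_Suc_ex by blast
    have "x^i*y^j + x^j*y^i = (x^i*y^i)*(y^d + x^d)"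
    proof -
      have k: "x^d*y^i = y^i*x^d" by (rule pc)
      show ?thesis unfolding j power_add by (simp add: distrib_left mult.assoc k)
    qed
    thus ?thesis using dd cmT_psum[OF e1 e2 xy, of d] by (simp add: cmT_mult add.commute)
  qed
  show ?thesis
  proof (cases "i \<le> j")
    case True then show ?thesis using main by simp
  next
    case False then show ?thesis using main[of j i] by (simp add: add.commute)
  qed
qed



lemma ch_add: "central_hom \<phi> \<Longrightarrow> \<phi> (a+b) = \<phi> a + \<phi> b" unfolding central_hom_def by blast
lemma ch_mult: "central_hom \<phi> \<Longrightarrow> \<phi> (a*b) = \<phi> a * \<phi> b" unfolding central_hom_def by blast
lemma ch_cent: "central_hom \<phi> \<Longrightarrow> \<phi> a * z = z * \<phi> a" unfolding central_hom_def by blast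
lemma ch_one: "central_hom \<phi> \<Longrightarrow> \<phi> 1 = 1" unfolding central_hom_def by blast
lemma ch_zero: "central_hom \<phi> \<Longrightarrow> \<phi> 0 = 0"
  using ch_add[of \<phi> 0 0] by simp
lemma ch_uminus: "central_hom \<phi> \<Longrightarrow> \<phi> (-a) = - \<phi> a"
proof -
  assume c: "central_hom \<phi>"
  have "\<phi> a + \<phi> (-a) = 0" using ch_add[OF c, of a "-a"] ch_zero[OF c] by simp
  thus ?thesis by (metis minus_unique)
qed
lemma ch_cmT: "central_hom \<phi> \<Longrightarrow> cmT T (\<phi> a)" unfolding cmT_def by (metis ch_cent)

inductive lin1 :: "('k::field \<Rightarrow> 'a::ring_1) \<Rightarrow> ('a \<Rightarrow> 'a) \<Rightarrow> bool" for \<phi> where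
  l0: "lin1 \<phi> (\<lambda>z. 0)"
| lm: "lin1 \<phi> (\<lambda>z. \<phi> c * z^k)"
| la: "lin1 \<phi> f \<Longrightarrow> lin1 \<phi> g \<Longrightarrow> lin1 \<phi> (\<lambda>z. f z + g z)"

lemma lin1_lz: assumes "central_hom \<phi>" "lin1 \<phi> f" shows "lin1 \<phi> (\<lambda>z. z * f z)"
  using assms(2)
proof induct
  case l0 then show ?case by (simp add: lin1.l0)
next
  case (lm c k)
  have "(\<lambda>z. z * (\<phi> c * z^k)) = (\<lambda>z. \<phi> c * z^Suc k)"
  proof (rule ext)
    fix z
    have "z * (\<phi> c * z^k) = (z * \<phi> c) * z^k" by (simp add: mult.assoc)
    also have "\<dots> = \<phi> c * (z * z^k)" by (simp add: ch_cent[OF assms(1)] mult.assoc)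
    finally show "z * (\<phi> c * z^k) = \<phi> c * z^Suc k" by simp
  qed
  then show ?case by (metis (no_types) lin1.lm)
next
  case (la f g)
  have "(\<lambda>z. z * (f z + g z)) = (\<lambda>z. z * f z + z * g z)" by (simp add: distrib_left)
  then show ?case using la(2,4) by (metis (no_types) lin1.la)
qed

lemma lin1_lc: assumes "central_hom \<phi>" "lin1 \<phi> f" shows "lin1 \<phi> (\<lambda>z. \<phi> d * f z)"
  using assms(2)
proof induct
  case l0 then show ?case by (simp add: lin1.l0)
next
  case (lm c k)
  have "(\<lambda>z. \<phi> d * (\<phi> c * z^k)) = (\<lambda>z. \<phi> (d*c) * z^k)"
    by (simp add: ch_mult[OF assms(1)] mult.assoc)
  then show ?case by (metis (no_types) lin1.lm)
next
  case (la f g)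
  have "(\<lambda>z. \<phi> d * (f z + g z)) = (\<lambda>z. \<phi> d * f z + \<phi> d * g z)" by (simp add: distrib_left)
  then show ?case using la(2,4) by (metis (no_types) lin1.la)
qed

lemma lin1_prod:
  assumes "central_hom \<phi>"
  shows "lin1 \<phi> (\<lambda>z. prod_list (map (\<lambda>c. (z - \<phi> (g c)) * \<phi> (h c)) cs))"
proof (induct cs)
  case Nil
  have "(\<lambda>z. prod_list (map (\<lambda>c. (z - \<phi> (g c)) * \<phi> (h c)) [])) = (\<lambda>z. \<phi> 1 * z^0)"
    using ch_one[OF assms] by simp
  then show ?case by (metis (no_types) lin1.lm)
next
  case (Cons a cs)
  let ?f = "\<lambda>z. prod_list (map (\<lambda>c. (z - \<phi> (g c)) * \<phi> (h c)) cs)"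
  have "(\<lambda>z. prod_list (map (\<lambda>c. (z - \<phi> (g c)) * \<phi> (h c)) (a#cs)))
      = (\<lambda>z. z * (\<phi> (h a) * ?f z) + \<phi> (-(g a * h a)) * ?f z)"
    by (rule ext) (simp add: left_diff_distrib distrib_left mult.assoc ch_uminus[OF assms] ch_mult[OF assms])
  moreover have "lin1 \<phi> (\<lambda>z. z * (\<phi> (h a) * ?f z) + \<phi> (-(g a * h a)) * ?f z)"
  proof -
    have h1: "lin1 \<phi> ?f" by (rule Cons)
    have h2: "lin1 \<phi> (\<lambda>z. \<phi> (h a) * ?f z)" by (rule lin1_lc[OF assms h1])
    show ?thesis by (rule lin1.la[OF lin1_lz[OF assms h2] lin1_lc[OF assms h1]])
  qed
  ultimately show ?case by simp
qed

lemma lin1_pair: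
  fixes T x y :: "'a::ring_1" and \<phi> :: "'k::field \<Rightarrow> 'a"
  assumes cent: "central_hom \<phi>"
    and e1: "cmT T (x+y)" and e2: "cmT T (x*y)" and xy: "x*y = y*x"
    and f: "lin1 \<phi> f" and g: "lin1 \<phi> g"
  shows "cmT T (f x * g y + g x * f y)"
  using f
proof induct
  case l0 then show ?case by (simp add: cmT_0)
next
  case (lm c k)
  show ?case using g
  proof induct
    case l0 then show ?case by (simp add: cmT_0)
  next
    case (lm d j)
    have "\<phi> c * x ^ k * (\<phi> d * y ^ j) + \<phi> d * x ^ j * (\<phi> c * y ^ k)
        = \<phi> (c*d) * (x^k*y^j + x^j*y^k)"
    proof -
      have a: "\<phi> c * x ^ k * (\<phi> d * y ^ j) = \<phi> (c*d) * (x^k*y^j)"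
        by (metis ch_cent[OF cent] ch_mult[OF cent] mult.assoc)
      have b: "\<phi> d * x ^ j * (\<phi> c * y ^ k) = \<phi> (c*d) * (x^j*y^k)"
        by (metis ch_cent[OF cent] ch_mult[OF cent] mult.assoc)
      show ?thesis unfolding a b by (simp add: distrib_left)
    qed
    then show ?case by (metis cmT_mult[OF ch_cmT[OF cent] cmT_h[OF e1 e2 xy]])
  next
    case (la g1 g2)
    have "\<phi> c * x ^ k * (g1 y + g2 y) + (g1 x + g2 x) * (\<phi> c * y ^ k)
       = (\<phi> c * x ^ k * g1 y + g1 x * (\<phi> c * y ^ k)) + (\<phi> c * x ^ k * g2 y + g2 x * (\<phi> c * y ^ k))"
      by (simp add: algebra_simps)
    then show ?case using cmT_add[OF la(2) la(4)] by simp
  qed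
next
  case (la f1 f2)
  have "(f1 x + f2 x) * g y + g x * (f1 y + f2 y) = (f1 x * g y + g x * f1 y) + (f2 x * g y + g x * f2 y)"
    by (simp add: algebra_simps)
  then show ?case using cmT_add[OF la(2) la(4)] by simp
qed



definition sw :: "nat \<Rightarrow> 'b list \<Rightarrow> 'b list" where
  "sw p xs = xs[p := xs!Suc p, Suc p := xs!p]"

lemma sw_len[simp]: "length (sw p xs) = length xs" by (simp add: sw_def)
lemma sw_nth: "Suc p < length xs \<Longrightarrow> k < length xs \<Longrightarrow>
   sw p xs ! k = xs ! (if k = p then Suc p else if k = Suc p then p else k)"
  by (simp add: sw_def nth_list_update)
lemma sw_nth_p: "Suc p < length xs \<Longrightarrow> sw p xs ! p = xs ! Suc p"
  by (simp add: sw_def nth_list_update)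
lemma sw_nth_Sp: "Suc p < length xs \<Longrightarrow> sw p xs ! Suc p = xs ! p"
  by (simp add: sw_def nth_list_update)
lemma sw_sw: "Suc p < length xs \<Longrightarrow> sw p (sw p xs) = xs"
  by (rule nth_equalityI) (auto simp: sw_nth)

lemma no_between:
  assumes xs: "xs \<in> std_tab ell n" and pn: "Suc p < n" and e: "e \<ge> 2"
    and res: "residue e \<kappa> (xs!p) = residue e \<kappa> (xs!Suc p)"
    and le: "fst (xs!p) = fst (xs!Suc p)" "fst (snd (xs!p)) \<le> fst (snd (xs!Suc p))"
            "snd (snd (xs!p)) \<le> snd (snd (xs!Suc p))"
  shows False
proof -
  have len: "length xs = n" and dist: "distinct xs" and md: "mp_diagram ell (set xs)"
    and ord: "\<And>i j. i<n \<Longrightarrow> j<n \<Longrightarrow> fst (xs!i) = fst (xs!j) \<Longrightarrow> fst (snd (xs!i)) \<le> fst (snd (xs!j))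
         \<Longrightarrow> snd (snd (xs!i)) \<le> snd (snd (xs!j)) \<Longrightarrow> i \<le> j"
    using xs unfolding std_tab_def by blast+
  obtain l a b where P: "xs!p = (l,a,b)" by (metis prod_cases3)
  obtain l' a' b' where Q: "xs!Suc p = (l',a',b')" by (metis prod_cases3)
  have ll: "l' = l" and aa: "a \<le> a'" and bb: "b \<le> b'" using le P Q by auto
  have neq: "xs!p \<noteq> xs!Suc p" using dist len pn by (simp add: nth_eq_iff_index_eq)
  have Pin: "(l,a,b) \<in> set xs" using P len pn by (metis Suc_lessD nth_mem)
  have Qin: "(l,a',b') \<in> set xs" using Q ll len pn by (metis nth_mem)
  have a1: "1 \<le> a" "1 \<le> b" using md Pin unfolding mp_diagram_def by fastforce+
  have down: "\<And>r' c'. 1 \<le> r' \<Longrightarrow> r' \<le> a' \<Longrightarrow> 1 \<le> c' \<Longrightarrow> c' \<le> b' \<Longrightarrow> (l, r', c') \<in> set xs"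
    using md Qin unfolding mp_diagram_def by fastforce
  have between: "m = (l,a',b')"
    if m: "m \<in> set xs" "m \<noteq> (l,a,b)" "fst m = l" "a \<le> fst (snd m)" "fst (snd m) \<le> a'"
         "b \<le> snd (snd m)" "snd (snd m) \<le> b'" for m
  proof -
    obtain k where k: "k < n" "xs!k = m" using m(1) len by (metis in_set_conv_nth)
    have "p \<le> k" using ord[of p k] k m P pn by auto
    moreover have "k \<le> Suc p" using ord[of k "Suc p"] k m Q ll pn by auto
    moreover have "k \<noteq> p" using k m P by auto
    ultimately have "k = Suc p" by auto
    thus ?thesis using k Q ll by simp
  qed
  have resd: "\<not> (int e dvd 1)" using e by auto
  have cP: "content \<kappa> (xs!p) = \<kappa> l - int a + int b" using P by (simp add: content_def)
  have cQ: "content \<kappa> (xs!Suc p) = \<kappa> l - int a' + int b'" using Q ll by (simp add: content_def)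
  have md: "int e dvd (content \<kappa> (xs!p) - content \<kappa> (xs!Suc p))"
    using res unfolding residue_def by (simp add: mod_eq_dvd_iff)
  show False
  proof (cases "a < a'")
    case True
    have "(l, Suc a, b) \<in> set xs" using down[of "Suc a" b] True a1 bb by auto
    hence "(l, Suc a, b) = (l,a',b')" using between[of "(l, Suc a, b)"] True bb by auto
    hence "a' = Suc a" "b' = b" by auto
    hence "content \<kappa> (xs!p) - content \<kappa> (xs!Suc p) = 1" using cP cQ by simp
    thus False using md resd by simp
  next
    case False
    hence a': "a' = a" using aa by simp
    hence "b < b'" using neq P Q ll bb by auto
    hence "(l, a, Suc b) \<in> set xs" using down[of a "Suc b"] a' a1 by auto
    hence "(l, a, Suc b) = (l,a',b')" using between[of "(l, a, Suc b)"] a' \<open>b<b'\<close> by auto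
    hence "b' = Suc b" by auto
    hence "content \<kappa> (xs!p) - content \<kappa> (xs!Suc p) = -1" using cP cQ a' by simp
    thus False using md resd by simp
  qed
qed

lemma sw_std:
  assumes xs: "xs \<in> std_res ell n \<kappa> e i" and pn: "Suc p < n" and e: "e \<ge> 2"
    and ii: "i!p = i!Suc p"
  shows "sw p xs \<in> std_res ell n \<kappa> e i"
proof -
  have xt: "xs \<in> std_tab ell n" and mi: "map (residue e \<kappa>) xs = i"
    using xs unfolding std_res_def by auto
  have len: "length xs = n" and dist: "distinct xs" and md: "mp_diagram ell (set xs)"
    and ord: "\<And>i j. i<n \<Longrightarrow> j<n \<Longrightarrow> fst (xs!i) = fst (xs!j) \<and> fst (snd (xs!i)) \<le> fst (snd (xs!j))
         \<and> snd (snd (xs!i)) \<le> snd (snd (xs!j)) \<Longrightarrow> i \<le> j"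
    using xt unfolding std_tab_def by blast+
  have res: "residue e \<kappa> (xs!p) = residue e \<kappa> (xs!Suc p)"
    using mi ii len pn by (metis Suc_lessD nth_map)
  let ?ys = "sw p xs"
  have "distinct ?ys" using dist len pn by (simp add: sw_def)
  moreover have "set ?ys = set xs" using len pn by (simp add: sw_def)
  moreover have "\<forall>a<n. \<forall>b<n. fst (?ys!a) = fst (?ys!b) \<and> fst (snd (?ys!a)) \<le> fst (snd (?ys!b))
         \<and> snd (snd (?ys!a)) \<le> snd (snd (?ys!b)) \<longrightarrow> a \<le> b"
  proof (intro allI impI)
    fix a b assume a: "a < n" and b: "b < n" and c: "fst (?ys!a) = fst (?ys!b) \<and> fst (snd (?ys!a)) \<le> fst (snd (?ys!b))
         \<and> snd (snd (?ys!a)) \<le> snd (snd (?ys!b))"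
    define \<pi> where "\<pi> k = (if k = p then Suc p else if k = Suc p then p else k)" for k
    have ya: "?ys!a = xs!(\<pi> a)" and yb: "?ys!b = xs!(\<pi> b)" using sw_nth[of p xs a] sw_nth[of p xs b] a b len pn unfolding \<pi>_def by simp_all
    have pa: "\<pi> a < n" "\<pi> b < n" using a b pn by (auto simp: \<pi>_def)
    have "\<pi> a \<le> \<pi> b" using ord[OF pa] c ya yb by simp
    moreover have "\<not> (a = Suc p \<and> b = p)"
    proof
      assume "a = Suc p \<and> b = p"
      hence "?ys!a = xs!p" "?ys!b = xs!Suc p" using ya yb by (auto simp: \<pi>_def)
      thus False using no_between[OF xt pn e res] c by simp
    qed
    ultimately show "a \<le> b" unfolding \<pi>_def by (auto split: if_splits)
  qed
  ultimately have "?ys \<in> std_tab ell n" using len md unfolding std_tab_def by simp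
  moreover have "map (residue e \<kappa>) ?ys = i"
    using mi ii len pn by (simp add: sw_def map_update)
       (metis Suc_lessD length_map list_update_id nth_map)
  ultimately show ?thesis unfolding std_res_def by simp
qed



definition PP :: "('k::field \<Rightarrow> 'a::ring_1) \<Rightarrow> 'k \<Rightarrow> (nat \<Rightarrow> int) \<Rightarrow> nat \<Rightarrow> nat \<Rightarrow> int \<Rightarrow> 'a \<Rightarrow> 'a" where
 "PP \<phi> t \<kappa> ell n a = (\<lambda>z. prod_list (map (\<lambda>c. (z - \<phi> (qint t c)) * \<phi> (inverse (qint t a - qint t c)))
     (sorted_list_of_set {c \<in> conts ell n \<kappa>. qint t a \<noteq> qint t c})))"

lemma F_tab_PP: "F_tab \<phi> t \<kappa> ell n L xs =
   prod_list (map (\<lambda>k. PP \<phi> t \<kappa> ell n (content \<kappa> (xs!(k-1))) (L k)) [1..<n+1])"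
  by (simp add: F_tab_def PP_def)

lemma lin1_PP: "central_hom \<phi> \<Longrightarrow> lin1 \<phi> (PP \<phi> t \<kappa> ell n a)"
  unfolding PP_def by (rule lin1_prod)

lemma cmT_PP: assumes "central_hom \<phi>" "cmT T z" shows "cmT T (PP \<phi> t \<kappa> ell n a z)"
  unfolding PP_def
  by (rule cmT_prod_list) (auto intro!: cmT_mult cmT_diff assms(2) ch_cmT[OF assms(1)])

lemma upt_split3: "1 \<le> r \<Longrightarrow> r < n \<Longrightarrow> [1..<n+1] = [1..<r] @ r # Suc r # [Suc (Suc r)..<n+1]"
proof -
  assume a: "1 \<le> r" "r < n"
  have "[1..<n+1] = [1..<r] @ [r..<r+(n+1-r)]" using upt_add_eq_append[of 1 r "n+1-r"] a by simp
  also have "r+(n+1-r) = n+1" using a by simp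
  also have "[r..<n+1] = r # Suc r # [Suc (Suc r)..<n+1]" using a by (simp add: upt_conv_Cons)
  finally show ?thesis .
qed

theorem lemma4p7:
  fixes \<phi> :: "'k::field \<Rightarrow> 'a::ring_1" and t :: 'k and \<kappa> :: "nat \<Rightarrow> int"
    and e ell n r :: nat and i :: "int list" and L T :: "nat \<Rightarrow> 'a"
  assumes "e \<ge> 2" and "ell \<ge> 1"
    and "\<forall>l. 1 \<le> l \<and> l < ell \<longrightarrow> \<kappa> l - \<kappa> (l+1) \<ge> int n"
    and "t \<noteq> 0" and "separating t \<kappa> ell n"
    and "central_hom \<phi>" and "hecke_rel \<phi> t \<kappa> ell n L T"
    and "length i = n" and "set i \<subseteq> {0..<int e}"
    and "1 \<le> r" and "r < n" and "i ! (r-1) = i ! r"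
  shows "T r * f_idem \<phi> t \<kappa> e ell n L i = f_idem \<phi> t \<kappa> e ell n L i * T r"
proof -
  note cent = assms(6)
  define p where "p = r - 1"
  have rp: "r = Suc p" using assms(10) p_def by simp
  have pn: "Suc p < n" using rp assms(11) by simp
  have ii: "i!p = i!Suc p" using assms(12) rp by simp
  have H: "(T r + 1) * (T r - \<phi> t) = 0" "L r * L (Suc r) = L (Suc r) * L r"
     "L (r+1) * (T r - \<phi> t + 1) = T r * L r + 1"
     "\<And>s. s\<in>{1..n} \<Longrightarrow> s \<noteq> r \<Longrightarrow> s \<noteq> r + 1 \<Longrightarrow> T r * L s = L s * T r"
    using assms(7) assms(10) assms(11) unfolding hecke_rel_def by auto
  define c where "c = \<phi> t - 1"
  define x where "x = L r"
  define y where "y = L (Suc r)"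
  define Tr where "Tr = T r"
  have cc: "\<And>z. c*z = z*c" unfolding c_def by (simp add: algebra_simps ch_cent[OF cent])
  have inv: "(c+1) * \<phi> (inverse t) = 1" unfolding c_def
    using assms(4) by (simp add: ch_mult[OF cent, symmetric] ch_one[OF cent])
  have quad: "Tr*Tr = c*Tr + (c+1)"
  proof -
    have "Tr*Tr - (c*Tr + (c+1)) = (T r + 1) * (T r - \<phi> t)"
      unfolding Tr_def c_def by (simp add: algebra_simps ch_cent[OF cent])
    thus ?thesis using H(1) by simp
  qed
  have A: "Tr*x = y*Tr - c*y - 1"
  proof -
    have "y*Tr - c*y - 1 - Tr*x = L (r+1) * (T r - \<phi> t + 1) - (T r * L r + 1)"
      unfolding Tr_def c_def x_def y_def by (simp add: algebra_simps ch_cent[OF cent])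
    thus ?thesis using H(3) by (simp add: algebra_simps)
  qed
  have xy: "x*y = y*x" using H(2) x_def y_def by simp
  have e1: "cmT Tr (x+y)" and e2: "cmT Tr (x*y)"
    using e_comm[OF cc inv quad A xy] unfolding cmT_def by auto
  have cL: "cmT Tr (L k)" if "k \<in> {1..n}" "k \<noteq> r" "k \<noteq> Suc r" for k
    using H(4)[OF that(1,2)] that(3) unfolding cmT_def Tr_def by simp
  define S where "S = std_res ell n \<kappa> e i"
  define F where "F = F_tab \<phi> t \<kappa> ell n L"
  have pair: "cmT Tr (F xs + F (sw p xs))" if xs: "xs \<in> S" for xs
  proof -
    have len: "length xs = n" using xs unfolding S_def std_res_def std_tab_def by simp
    define G where "G ys k = PP \<phi> t \<kappa> ell n (content \<kappa> (ys!(k-1))) (L k)" for ys k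
    have FG: "F ys = prod_list (map (G ys) [1..<r]) * (G ys r * (G ys (Suc r) *
        prod_list (map (G ys) [Suc (Suc r)..<n+1])))" for ys
      unfolding F_def F_tab_PP G_def[abs_def] upt_split3[OF assms(10,11)] by simp
    have m1: "map (G (sw p xs)) [1..<r] = map (G xs) [1..<r]"
    proof (rule map_cong[OF refl])
      fix k assume "k \<in> set [1..<r]"
      hence "k - 1 < length xs" "k - 1 \<noteq> p" "k - 1 \<noteq> Suc p" using rp len pn by auto
      thus "G (sw p xs) k = G xs k" unfolding G_def using sw_nth[of p xs "k-1"] pn len by simp
    qed
    have m2: "map (G (sw p xs)) [Suc (Suc r)..<n+1] = map (G xs) [Suc (Suc r)..<n+1]"
    proof (rule map_cong[OF refl])
      fix k assume "k \<in> set [Suc (Suc r)..<n+1]"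
      hence "k - 1 < length xs" "k - 1 \<noteq> p" "k - 1 \<noteq> Suc p" using rp len pn by auto
      thus "G (sw p xs) k = G xs k" unfolding G_def using sw_nth[of p xs "k-1"] pn len by simp
    qed
    define a where "a = content \<kappa> (xs!p)"
    define b where "b = content \<kappa> (xs!Suc p)"
    define Aa where "Aa = prod_list (map (G xs) [1..<r])"
    define Bb where "Bb = prod_list (map (G xs) [Suc (Suc r)..<n+1])"
    have g1: "G xs r = PP \<phi> t \<kappa> ell n a x" "G xs (Suc r) = PP \<phi> t \<kappa> ell n b y"
      unfolding G_def a_def b_def x_def y_def rp by simp_all
    have g2: "G (sw p xs) r = PP \<phi> t \<kappa> ell n b x" "G (sw p xs) (Suc r) = PP \<phi> t \<kappa> ell n a y"
      unfolding G_def a_def b_def x_def y_def rp using sw_nth[of p xs p] sw_nth[of p xs "Suc p"] pn len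
      by simp_all
    have "F xs + F (sw p xs) = Aa * ((PP \<phi> t \<kappa> ell n a x * PP \<phi> t \<kappa> ell n b y
         + PP \<phi> t \<kappa> ell n b x * PP \<phi> t \<kappa> ell n a y) * Bb)"
      unfolding FG m1 m2 g1 g2 Aa_def Bb_def by (simp add: algebra_simps)
    moreover have "cmT Tr Aa" unfolding Aa_def
    proof (rule cmT_prod_list)
      fix z assume "z \<in> set (map (G xs) [1..<r])"
      then obtain k where k: "k \<in> set [1..<r]" "z = G xs k" unfolding set_map by blast
      show "cmT Tr z" unfolding k(2) G_def
        by (rule cmT_PP[OF cent cL]) (use k assms(11) in auto)
    qed
    moreover have "cmT Tr Bb" unfolding Bb_def
    proof (rule cmT_prod_list)
      fix z assume "z \<in> set (map (G xs) [Suc (Suc r)..<n+1])"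
      then obtain k where k: "k \<in> set [Suc (Suc r)..<n+1]" "z = G xs k" unfolding set_map by blast
      show "cmT Tr z" unfolding k(2) G_def
        by (rule cmT_PP[OF cent cL]) (use k in auto)
    qed
    moreover have "cmT Tr (PP \<phi> t \<kappa> ell n a x * PP \<phi> t \<kappa> ell n b y
         + PP \<phi> t \<kappa> ell n b x * PP \<phi> t \<kappa> ell n a y)"
      by (rule lin1_pair[OF cent e1 e2 xy lin1_PP[OF cent] lin1_PP[OF cent]])
    ultimately show ?thesis by (simp add: cmT_mult)
  qed
  have "cmT Tr (sum F S)"
  proof (cases "finite S")
    case False then show ?thesis by (simp add: cmT_0)
  next
    case fin: True
    define S1 where "S1 = {xs \<in> S. xs!p < xs!Suc p}"
    have lenS: "\<And>xs. xs \<in> S \<Longrightarrow> length xs = n" unfolding S_def std_res_def std_tab_def by simp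
    have swS: "\<And>xs. xs \<in> S \<Longrightarrow> sw p xs \<in> S"
      unfolding S_def using sw_std[OF _ pn assms(1) ii] by blast
    have S1S: "S1 \<subseteq> S" unfolding S1_def by auto
    have S2S: "sw p ` S1 \<subseteq> S" using swS S1S by auto
    have disj: "S1 \<inter> sw p ` S1 = {}"
    proof (rule ccontr)
      assume "S1 \<inter> sw p ` S1 \<noteq> {}"
      then obtain xs where xs: "xs \<in> S1" "sw p xs \<in> S1" by auto
      have "length xs = n" using xs S1S lenS by auto
      hence "sw p xs ! p = xs!Suc p" "sw p xs ! Suc p = xs ! p" using sw_nth_p sw_nth_Sp pn by auto
      thus False using xs unfolding S1_def by auto
    qed
    have cover: "S = S1 \<union> sw p ` S1"
    proof
      show "S1 \<union> sw p ` S1 \<subseteq> S" using S1S S2S by auto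
      show "S \<subseteq> S1 \<union> sw p ` S1"
      proof
        fix xs assume xs: "xs \<in> S"
        have len: "length xs = n" using lenS xs by simp
        have "distinct xs" using xs unfolding S_def std_res_def std_tab_def by simp
        hence ne: "xs!p \<noteq> xs!Suc p" using len pn by (simp add: nth_eq_iff_index_eq)
        show "xs \<in> S1 \<union> sw p ` S1"
        proof (cases "xs!p < xs!Suc p")
          case True then show ?thesis using xs unfolding S1_def by auto
        next
          case False
          hence lt: "xs!Suc p < xs!p" using ne by auto
          have "sw p xs ! p = xs!Suc p" "sw p xs ! Suc p = xs ! p" using sw_nth_p sw_nth_Sp len pn by auto
          hence "sw p xs \<in> S1" using lt swS xs unfolding S1_def by auto
          moreover have "xs = sw p (sw p xs)" using sw_sw len pn by metis
          ultimately show ?thesis by blast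
        qed
      qed
    qed
    have inj: "inj_on (sw p) S1"
      by (rule inj_on_inverseI[where g="sw p"]) (use S1S lenS sw_sw pn in fastforce)
    have f1: "finite S1" using fin S1S finite_subset by auto
    have "sum F S = sum F S1 + sum F (sw p ` S1)"
      unfolding cover by (rule sum.union_disjoint[OF f1 finite_imageI[OF f1] disj])
    also have "sum F (sw p ` S1) = sum (\<lambda>xs. F (sw p xs)) S1"
      using sum.reindex[OF inj, of F] by simp
    also have "sum F S1 + \<dots> = sum (\<lambda>xs. F xs + F (sw p xs)) S1"
      by (simp add: sum.distrib)
    finally have "sum F S = sum (\<lambda>xs. F xs + F (sw p xs)) S1" .
    moreover have "cmT Tr (sum (\<lambda>xs. F xs + F (sw p xs)) S1)"
      by (rule cmT_sum) (use pair S1S in auto)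
    ultimately show ?thesis by simp
  qed
  thus ?thesis unfolding cmT_def Tr_def F_def S_def f_idem_def by simp
qed


end
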